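(* Let $n$ be even, let $r\le s\le 2r-1$, and let $m=s-r+1$ (the number of edges of $P^{(r)}_s$). Then $$\tau(n,P^{(r)}_s)\le \tau(n,LP^{(r)}_s)\le 2h(n,r,m)+h(n,r-1,m).$$
   Context: An ordered $r$-uniform hypergraph is an $r$-uniform hypergraph whose vertex set is linearly ordered. $K^{(r)}_n$ denotes the ordered complete $r$-uniform hypergraph on vertex set $[n]=\{1,\dots,n\}$ (natural order), whose edges are all $r$-subsets of $[n]$. A copy of an ordered hypergraph $H$ in $K^{(r)}_n$ is the image of $H$ under an order-preserving injection $f:V(H)\to[n]$ (its edges being the images $f(e)$, $e\in E(H)$). The natural (tight) path $P^{(r)}_s$ has vertices $v_1<\dots<v_s$ and its edges are all sets of $r$ consecutive vertices $\{v_j,\dots,v_{j+r-1}\}$, $1\le j\le s-r+1$. The loose path $LP^{(r)}_s$ is obtained from $P^{(r)}_s$ by keeping only its first edge $\{v_1,\dots,v_r\}$ and its last edge $\{v_{s-r+1},\dots,v_s\}$ (same vertex set and order). For an ordered $r$-uniform $H$, an $H$-transversal is a set of edges of $K^{(r)}_n$ meeting (the edge set of) every copy of $H$ in $K^{(r)}_n$, and $\tau(n,H)$ is the minimum size of an $H$-transversal. An interval partition $(X,Y,Z)$ of $[n]$ consists of consecutive (possibly empty) intervals $X<Y<Z$ with union $[n]$. A set $S\subseteq[n]$ is $m$-left-biased if there is an interval partition $(X,Y,Z)$ of $[n]$ with $|X|=|Z|$, $|X\cap S|=m$ and $|Z\cap S|=0$. $h(n,t,m)$ denotes the number of $t$-subsets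 of $[n]$ that are $m$-left-biased. *)

theory Defs
  imports Main
begin

text \<open>An ordered r-uniform hypergraph H is given by its number of vertices s
  (vertex set {1..s} with the natural order) and its edge set E (a set of subsets
  of {1..s}).\<close>

definition complete_edges :: "nat \<Rightarrow> nat \<Rightarrow> nat set set" where
  "complete_edges n r = {e. e \<subseteq> {1..n} \<and> card e = r}"

definition copies :: "nat \<Rightarrow> nat \<Rightarrow> nat set set \<Rightarrow> nat set set set" where
  "copies n s E = {(\<lambda>e. f ` e) ` E | f. strict_mono_on {1..s} f \<and> f ` {1..s} \<subseteq> {1..n}}"

definition is_transversal :: "nat \<Rightarrow> nat \<Rightarrow> nat \<Rightarrow> nat set set \<Rightarrow> nat set set \<Rightarrow> bool" where
  "is_transversal n r s E T \<longleftrightarrow> T \<subseteq> complete_edges n r \<and>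
     (\<forall>C \<in> copies n s E. T \<inter> C \<noteq> {})"

definition tau :: "nat \<Rightarrow> nat \<Rightarrow> nat \<Rightarrow> nat set set \<Rightarrow> nat" where
  "tau n r s E = (LEAST k. \<exists>T. is_transversal n r s E T \<and> card T = k)"

definition tight_path :: "nat \<Rightarrow> nat \<Rightarrow> nat set set" where
  "tight_path r s = {{j..j + r - 1} | j. 1 \<le> j \<and> j \<le> s - r + 1}"

definition loose_path :: "nat \<Rightarrow> nat \<Rightarrow> nat set set" where
  "loose_path r s = {{1..r}, {s - r + 1..s}}"

definition interval_partition :: "nat \<Rightarrow> nat set \<Rightarrow> nat set \<Rightarrow> nat set \<Rightarrow> bool" where
  "interval_partition n X Y Z \<longleftrightarrow> (\<exists>a b. a \<le> b \<and> b \<le> n \<and>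
     X = {1..a} \<and> Y = {a+1..b} \<and> Z = {b+1..n})"

definition left_biased :: "nat \<Rightarrow> nat \<Rightarrow> nat set \<Rightarrow> bool" where
  "left_biased n m S \<longleftrightarrow> (\<exists>X Y Z. interval_partition n X Y Z \<and> card X = card Z \<and>
     card (X \<inter> S) = m \<and> card (Z \<inter> S) = 0)"

definition h :: "nat \<Rightarrow> nat \<Rightarrow> nat \<Rightarrow> nat" where
  "h n t m = card {S. S \<subseteq> {1..n} \<and> card S = t \<and> left_biased n m S}"

end

theory Submission
  imports Defs
begin

definition refl_set :: "nat \<Rightarrow> nat set \<Rightarrow> nat set" where
  "refl_set n S = (\<lambda>x. n + 1 - x) ` S"
definition LB :: "nat \<Rightarrow> nat \<Rightarrow> nat \<Rightarrow> nat set set" where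
  "LB n r m = {S. S \<subseteq> {1..n} \<and> card S = r \<and> left_biased n m S}"
definition ext :: "nat \<Rightarrow> nat \<Rightarrow> nat set \<Rightarrow> nat set" where
  "ext n m S = insert (n + 1 - sorted_list_of_set S ! (m - 1)) S"
definition TT :: "nat \<Rightarrow> nat \<Rightarrow> nat \<Rightarrow> nat set set" where
  "TT n r m = LB n r m \<union> refl_set n ` LB n r m \<union> (ext n m ` LB n (r - 1) m \<inter> complete_edges n r)"

lemma lb_intro:
  assumes "2 * k \<le> n" "card ({1..k} \<inter> S) = m" "\<forall>x\<in>S. x + k \<le> n"
  shows "left_biased n m S"
  unfolding left_biased_def
proof (intro exI conjI)
  show "interval_partition n {1..k} {k+1..n-k} {n-k+1..n}"
    unfolding interval_partition_def using assms(1) by (intro exI[of _ k] exI[of _ "n-k"]) auto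
  show "card {1..k} = card {n-k+1..n}" using assms(1) by simp
  show "card ({1..k} \<inter> S) = m" by fact
  have "{n-k+1..n} \<inter> S = {}" using assms(3) by fastforce
  then show "card ({n-k+1..n} \<inter> S) = 0" by simp
qed

lemma img_card:
  fixes f :: "nat \<Rightarrow> nat"
  assumes "strict_mono_on {1..s} f" "1 \<le> a" "b \<le> s"
  shows "card (f ` {a..b}) = b + 1 - a"
proof -
  have "inj_on f {a..b}"
    using strict_mono_on_imp_inj_on[OF assms(1)] assms by (auto intro: inj_on_subset)
  then show ?thesis by (simp add: card_image)
qed

lemma refl_refl: "B \<subseteq> {1..n} \<Longrightarrow> refl_set n (refl_set n B) = B"
  unfolding refl_set_def by (force simp: image_image)

lemma refl_card: assumes "B \<subseteq> {1..n}" shows "card (refl_set n B) = card B"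
proof -
  have "inj_on (\<lambda>x. n + 1 - x) B"
  proof (rule inj_onI)
    fix x y assume "x \<in> B" "y \<in> B" "n + 1 - x = n + 1 - y"
    then show "x = y" using assms by (auto dest!: subsetD)
  qed
  then show ?thesis unfolding refl_set_def by (rule card_image)
qed

lemma refl_sub: "B \<subseteq> {1..n} \<Longrightarrow> refl_set n B \<subseteq> {1..n}"
  unfolding refl_set_def by (auto dest!: subsetD)

lemma cover:
  assumes ev: "even n" and r1: "1 \<le> r" and rs: "r \<le> s" and s2: "s \<le> 2 * r - 1"
    and mdef: "m = s - r + 1" and sm: "strict_mono_on {1..s} (f::nat\<Rightarrow>nat)" and rng: "f ` {1..s} \<subseteq> {1..n}"
  shows "f ` {1..r} \<in> TT n r m \<or> f ` {m..s} \<in> TT n r m"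
proof -
  have m1: "1 \<le> m" and mr: "m \<le> r" using mdef s2 rs r1 by auto
  have le_iff: "f i \<le> f j \<longleftrightarrow> i \<le> j" if "i \<in> {1..s}" "j \<in> {1..s}" for i j
    using strict_mono_on_less_eq[OF sm that] .
  have lt_iff: "f i < f j \<longleftrightarrow> i < j" if "i \<in> {1..s}" "j \<in> {1..s}" for i j
    using strict_mono_on_less[OF sm that] .
  have fr: "f i \<in> {1..n}" if "i \<in> {1..s}" for i using rng that by blast
  have fmr: "f m \<le> f r" using le_iff[of m r] m1 mr rs by auto
  consider "f m + f r \<le> n" | "f m + f r \<ge> n + 2" | "f m + f r = n + 1" by linarith
  then show ?thesis
  proof cases
    case 1
    have eq: "{1..f m} \<inter> f ` {1..r} = f ` {1..m}"
    proof (intro equalityI subsetI)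
      fix x assume "x \<in> {1..f m} \<inter> f ` {1..r}"
      then obtain i where "i \<in> {1..r}" "x = f i" "f i \<le> f m" by auto
      then show "x \<in> f ` {1..m}" using le_iff[of i m] m1 mr rs by auto
    next
      fix x assume "x \<in> f ` {1..m}"
      then obtain i where "i \<in> {1..m}" "x = f i" by auto
      then show "x \<in> {1..f m} \<inter> f ` {1..r}" using le_iff[of i m] fr[of i] m1 mr rs by auto
    qed
    have "left_biased n m (f ` {1..r})"
    proof (rule lb_intro[of "f m"])
      show "2 * f m \<le> n" using 1 fmr by linarith
      show "card ({1..f m} \<inter> f ` {1..r}) = m" unfolding eq using img_card[OF sm, of 1 m] m1 mr rs by simp
      show "\<forall>x\<in>f ` {1..r}. x + f m \<le> n"
      proof
        fix x assume "x \<in> f ` {1..r}"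
        then obtain i where "i \<in> {1..r}" "x = f i" by auto
        then show "x + f m \<le> n" using le_iff[of i r] 1 rs by auto
      qed
    qed
    moreover have "f ` {1..r} \<subseteq> {1..n}" using rng rs by auto
    moreover have "card (f ` {1..r}) = r" using img_card[OF sm, of 1 r] rs by simp
    ultimately show ?thesis unfolding TT_def LB_def by auto
  next
    case 2
    define B where "B = f ` {m..s}"
    have Bsub: "B \<subseteq> {1..n}" using rng m1 unfolding B_def by auto
    have Bcard: "card B = r" unfolding B_def using img_card[OF sm, of m s] m1 mdef rs by simp
    have eq: "{1..n + 1 - f r} \<inter> refl_set n B = refl_set n (f ` {r..s})"
    proof (intro equalityI subsetI)
      fix x assume "x \<in> {1..n + 1 - f r} \<inter> refl_set n B"
      then obtain i where i: "i \<in> {m..s}" "x = n + 1 - f i" "n + 1 - f i \<le> n + 1 - f r"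
        unfolding refl_set_def B_def by auto
      have "f i \<le> n" "f r \<le> n" using fr[of i] fr[of r] i m1 r1 rs by auto
      then have "f r \<le> f i" using i(3) by linarith
      then have "r \<le> i" using le_iff[of r i] i m1 r1 rs by auto
      then show "x \<in> refl_set n (f ` {r..s})" using i unfolding refl_set_def by auto
    next
      fix x assume "x \<in> refl_set n (f ` {r..s})"
      then obtain i where i: "i \<in> {r..s}" "x = n + 1 - f i" unfolding refl_set_def by auto
      have "f i \<le> n" "f r \<le> f i" using fr[of i] le_iff[of r i] i r1 by auto
      then show "x \<in> {1..n + 1 - f r} \<inter> refl_set n B"
        using i mr unfolding refl_set_def B_def by auto
    qed
    have "left_biased n m (refl_set n B)"
    proof (rule lb_intro[of "n + 1 - f r"])
      show "2 * (n + 1 - f r) \<le> n" using 2 fmr by linarith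
      have "card (f ` {r..s}) = m" using img_card[OF sm, of r s] r1 rs mdef by simp
      moreover have "f ` {r..s} \<subseteq> {1..n}" using rng r1 by auto
      ultimately show "card ({1..n + 1 - f r} \<inter> refl_set n B) = m" unfolding eq
        using refl_card by simp
      show "\<forall>x\<in>refl_set n B. x + (n + 1 - f r) \<le> n"
      proof
        fix x assume "x \<in> refl_set n B"
        then obtain i where i: "i \<in> {m..s}" "x = n + 1 - f i" unfolding refl_set_def B_def by auto
        have "f m \<le> f i" "f i \<le> n" "f r \<le> n" using le_iff[of m i] fr[of i] fr[of r] i m1 r1 rs by auto
        then show "x + (n + 1 - f r) \<le> n" using i 2 by linarith
      qed
    qed
    then have "refl_set n B \<in> LB n r m" unfolding LB_def using refl_sub[OF Bsub] refl_card[OF Bsub] Bcard by auto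
    then have "B \<in> TT n r m" unfolding TT_def using refl_refl[OF Bsub] by (metis UnI1 UnI2 image_eqI)
    then show ?thesis unfolding B_def by simp
  next
    case 3
    have "m \<noteq> r"
    proof
      assume "m = r"
      then have "Suc n = 2 * f r" using 3 by simp
      then show False using ev by presburger
    qed
    then have mr': "m \<le> r - 1" using mr by simp
    define A where "A = f ` {1..r-1}"
    have Asub: "A \<subseteq> {1..n}" using fr rs unfolding A_def by force
    have Acard: "card A = r - 1" unfolding A_def using img_card[OF sm, of 1 "r-1"] rs by simp
    have eq: "{1..f m} \<inter> A = f ` {1..m}"
    proof (intro equalityI subsetI)
      fix x assume "x \<in> {1..f m} \<inter> A"
      then obtain i where "i \<in> {1..r-1}" "x = f i" "f i \<le> f m" unfolding A_def by auto
      then show "x \<in> f ` {1..m}" using le_iff[of i m] m1 mr rs by auto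
    next
      fix x assume "x \<in> f ` {1..m}"
      then obtain i where "i \<in> {1..m}" "x = f i" by auto
      then show "x \<in> {1..f m} \<inter> A" using le_iff[of i m] fr[of i] m1 mr' rs unfolding A_def by auto
    qed
    have "left_biased n m A"
    proof (rule lb_intro[of "f m"])
      show "2 * f m \<le> n" using 3 fmr \<open>m \<noteq> r\<close> lt_iff[of m r] m1 mr rs by auto
      show "card ({1..f m} \<inter> A) = m" unfolding eq using img_card[OF sm, of 1 m] m1 mr rs by simp
      show "\<forall>x\<in>A. x + f m \<le> n"
      proof
        fix x assume "x \<in> A"
        then obtain i where i: "i \<in> {1..r-1}" "x = f i" unfolding A_def by auto
        then have "i < r" "i \<le> s" "1 \<le> i" using rs r1 by auto
        then have "f i < f r" using lt_iff[of i r] rs r1 by auto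
        then show "x + f m \<le> n" using i 3 by linarith
      qed
    qed
    then have ALB: "A \<in> LB n (r - 1) m" unfolding LB_def using Asub Acard by auto
    have "sorted_list_of_set A = map f [1..<r]"
    proof -
      have "sorted_wrt (<) (map f [1..<r])"
        unfolding sorted_wrt_map
        by (rule sorted_wrt_mono_rel[OF _ sorted_wrt_upt]) 
           (use rs in \<open>auto simp: lt_iff\<close>)
      moreover have "set (map f [1..<r]) = A" unfolding A_def using r1 by auto
      moreover have "length (map f [1..<r]) = card A" using Acard by simp
      moreover have "finite A" unfolding A_def by simp
      ultimately show ?thesis using sorted_list_of_set_unique by blast
    qed
    then have "sorted_list_of_set A ! (m - 1) = f m" using m1 mr' by simp
    then have "ext n m A = insert (f r) A" unfolding ext_def using 3
      by (metis add_diff_cancel_left' add.commute Suc_eq_plus1)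
    moreover have "{1..r} = insert r {1..r-1}" using r1 by auto
    ultimately have "ext n m A = f ` {1..r}" unfolding A_def by simp
    moreover have "f ` {1..r} \<in> complete_edges n r"
      unfolding complete_edges_def using rng rs img_card[OF sm, of 1 r] by auto
    ultimately have "f ` {1..r} \<in> TT n r m" unfolding TT_def using ALB by (metis IntI UnI2 image_eqI)
    then show ?thesis by simp
  qed
qed

lemma LB_finite: "finite (LB n r m)"
  by (rule finite_subset[of _ "Pow {1..n}"]) (auto simp: LB_def)

lemma TT_transversal:
  assumes ev: "even n" and r1: "1 \<le> r" and rs: "r \<le> s" and s2: "s \<le> 2 * r - 1"
    and mdef: "m = s - r + 1"
  shows "is_transversal n r s (loose_path r s) (TT n r m)"
  unfolding is_transversal_def
proof (intro conjI ballI)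
  show "TT n r m \<subseteq> complete_edges n r"
  proof -
    have "LB n r m \<subseteq> complete_edges n r" unfolding LB_def complete_edges_def by auto
    moreover have "refl_set n ` LB n r m \<subseteq> complete_edges n r"
      unfolding LB_def complete_edges_def using refl_sub refl_card by auto
    ultimately show ?thesis unfolding TT_def by auto
  qed
next
  fix C assume "C \<in> copies n s (loose_path r s)"
  then obtain f where f: "strict_mono_on {1..s} (f::nat\<Rightarrow>nat)" "f ` {1..s} \<subseteq> {1..n}"
    and C: "C = (\<lambda>e. f ` e) ` loose_path r s" unfolding copies_def by blast
  have "C = {f ` {1..r}, f ` {m..s}}" unfolding C loose_path_def mdef by simp
  then show "TT n r m \<inter> C \<noteq> {}" using cover[OF ev r1 rs s2 mdef f] by auto
qed

lemma TT_card: "card (TT n r m) \<le> 2 * h n r m + h n (r - 1) m"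
proof -
  have hL: "h n r m = card (LB n r m)" "h n (r-1) m = card (LB n (r-1) m)"
    unfolding h_def LB_def by simp_all
  have "card (TT n r m) \<le> card (LB n r m) + card (refl_set n ` LB n r m)
      + card (ext n m ` LB n (r - 1) m \<inter> complete_edges n r)"
    unfolding TT_def by (meson card_Un_le add_le_mono order_trans le_refl)
  also have "\<dots> \<le> card (LB n r m) + card (LB n r m) + card (LB n (r - 1) m)"
  proof (intro add_mono)
    show "card (refl_set n ` LB n r m) \<le> card (LB n r m)" by (rule card_image_le[OF LB_finite])
    have "card (ext n m ` LB n (r - 1) m \<inter> complete_edges n r) \<le> card (ext n m ` LB n (r - 1) m)"
      by (rule card_mono) (auto intro: LB_finite)
    also have "\<dots> \<le> card (LB n (r - 1) m)" by (rule card_image_le[OF LB_finite])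
    finally show "card (ext n m ` LB n (r - 1) m \<inter> complete_edges n r) \<le> card (LB n (r - 1) m)" .
  qed simp
  finally show ?thesis using hL by simp
qed

theorem theorem2p1:
  fixes n r s m :: nat
  assumes "even n" and "1 \<le> r" and "r \<le> s" and "s \<le> 2 * r - 1"
    and "m = s - r + 1"
  shows "tau n r s (tight_path r s) \<le> tau n r s (loose_path r s)
       \<and> tau n r s (loose_path r s) \<le> 2 * h n r m + h n (r - 1) m"
proof
  have TT: "is_transversal n r s (loose_path r s) (TT n r m)" using TT_transversal[OF assms] .
  show "tau n r s (loose_path r s) \<le> 2 * h n r m + h n (r - 1) m"
  proof -
    have "tau n r s (loose_path r s) \<le> card (TT n r m)"
      unfolding tau_def by (rule Least_le) (use TT in blast)
    then show ?thesis using TT_card[of n r m] by linarith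
  qed
  obtain T0 where T0: "is_transversal n r s (loose_path r s) T0" "card T0 = tau n r s (loose_path r s)"
    using LeastI_ex[of "\<lambda>k. \<exists>T. is_transversal n r s (loose_path r s) T \<and> card T = k"] TT
    unfolding tau_def by blast
  have sub: "loose_path r s \<subseteq> tight_path r s"
    unfolding loose_path_def tight_path_def using assms(2,3)
    by (auto intro!: exI[of _ 1] exI[of _ "s - r + 1"])
  have tt: "is_transversal n r s (tight_path r s) T0"
    unfolding is_transversal_def
  proof (intro conjI ballI)
    show "T0 \<subseteq> complete_edges n r" using T0(1) unfolding is_transversal_def by blast
  next
    fix C assume "C \<in> copies n s (tight_path r s)"
    then obtain f where f: "strict_mono_on {1..s} (f::nat\<Rightarrow>nat)" "f ` {1..s} \<subseteq> {1..n}"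
      and C: "C = (\<lambda>e. f ` e) ` tight_path r s" unfolding copies_def by blast
    have "(\<lambda>e. f ` e) ` loose_path r s \<in> copies n s (loose_path r s)"
      unfolding copies_def using f by blast
    then have "T0 \<inter> (\<lambda>e. f ` e) ` loose_path r s \<noteq> {}" using T0(1) unfolding is_transversal_def by blast
    moreover have "(\<lambda>e. f ` e) ` loose_path r s \<subseteq> C" unfolding C using sub by blast
    ultimately show "T0 \<inter> C \<noteq> {}" by blast
  qed
  show "tau n r s (tight_path r s) \<le> tau n r s (loose_path r s)"
  proof -
    have "tau n r s (tight_path r s) \<le> card T0"
      unfolding tau_def by (rule Least_le) (use \<open>is_transversal n r s (tight_path r s) T0\<close> in blast)
    then show ?thesis using T0(2) by simp
  qed
qed

end
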